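(* Let $N\ge3$, $\mu\ge0$, assume (K0) and (F0), and let $p>p_S(\alpha)$. Let $t_1\in\mathbb{R}$ and let $w\in C^2(-\infty,t_1)$ be a positive solution of $$w''+aw'-A^{p-1}w+L(t)w^p+\mu g(t)=0\quad (t<t_1)$$ satisfying $0<\limsup_{t\to-\infty}w(t)<\infty$. Then $\lim_{t\to-\infty}w(t)=\gamma$.
   Context: (K0): $K:(0,\infty)\to(0,\infty)$ is continuous and $K(r)=(k_0+o(1))r^{\alpha}$ as $r\to0$ for some $\alpha>-2$, $k_0>0$. (F0): $f:(0,\infty)\to[0,\infty)$ is continuous, not identically zero, and $f(r)=O(r^{\nu})$ as $r\to0$ for some $\nu>-2$. $p_S(\alpha)=\frac{N+2+2\alpha}{N-2}$, $\theta:=\frac{2+\alpha}{p-1}$, $a:=N-2-2\theta$, $c:=N-2-\theta$, $A:=(\theta c)^{1/(p-1)}$, $\gamma:=k_0^{-1/(p-1)}A$, $L(t):=e^{-\alpha t}K(e^t)$, $g(t):=e^{(2+\theta)t}f(e^t)$. (This equation is what $w(t)=e^{\theta t}u(e^t)$ satisfies when $u$ solves $u''+\frac{N-1}{r}u'+K(r)u^p+\mu f(r)=0$.) *)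

theory Defs
  imports "HOL-Analysis.Analysis" "HOL-Library.Landau_Symbols"
begin

definition pS :: "real \<Rightarrow> real \<Rightarrow> real" where
  "pS N \<alpha> = (N + 2 + 2 * \<alpha>) / (N - 2)"

definition theta :: "real \<Rightarrow> real \<Rightarrow> real" where
  "theta \<alpha> p = (2 + \<alpha>) / (p - 1)"

definition acoef :: "real \<Rightarrow> real \<Rightarrow> real \<Rightarrow> real" where
  "acoef N \<alpha> p = N - 2 - 2 * theta \<alpha> p"

definition ccoef :: "real \<Rightarrow> real \<Rightarrow> real \<Rightarrow> real" where
  "ccoef N \<alpha> p = N - 2 - theta \<alpha> p"

definition Acoef :: "real \<Rightarrow> real \<Rightarrow> real \<Rightarrow> real" where
  "Acoef N \<alpha> p = (theta \<alpha> p * ccoef N \<alpha> p) powr (1 / (p - 1))"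

definition gammacoef :: "real \<Rightarrow> real \<Rightarrow> real \<Rightarrow> real \<Rightarrow> real" where
  "gammacoef k0 N \<alpha> p = k0 powr (- 1 / (p - 1)) * Acoef N \<alpha> p"

definition Lfun :: "(real \<Rightarrow> real) \<Rightarrow> real \<Rightarrow> real \<Rightarrow> real" where
  "Lfun K \<alpha> t = exp (- \<alpha> * t) * K (exp t)"

definition gfun :: "(real \<Rightarrow> real) \<Rightarrow> real \<Rightarrow> real \<Rightarrow> real \<Rightarrow> real" where
  "gfun f \<alpha> p t = exp ((2 + theta \<alpha> p) * t) * f (exp t)"

end

theory Submission
  imports Defs
begin


lemma v_bound:
  fixes w v v2 :: "real \<Rightarrow> real" and a H M T :: real
  assumes a: "a > 0"
    and dw: "\<And>t. t \<le> T \<Longrightarrow> (w has_real_derivative v t) (at t)"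
    and dv: "\<And>t. t \<le> T \<Longrightarrow> (v has_real_derivative v2 t) (at t)"
    and h: "\<And>t. t \<le> T \<Longrightarrow> \<bar>v2 t + a * v t\<bar> \<le> H"
    and wpos: "\<And>t. t \<le> T \<Longrightarrow> 0 < w t" and wle: "\<And>t. t \<le> T \<Longrightarrow> w t \<le> M"
    and t: "t \<le> T"
  shows "\<bar>v t\<bar> \<le> H / a + 1"
proof (rule ccontr)
  assume "\<not> \<bar>v t\<bar> \<le> H / a + 1"
  hence "v t > H/a + 1 \<or> v t < -(H/a + 1)" by linarith
  thus False
  proof
    assume vt: "v t > H/a + 1"
    define u where "u = (\<lambda>s. exp (a * s) * (v s - H/a))"
    have du: "(u has_real_derivative exp (a * s) * (a * (v s - H/a) + v2 s)) (at s)" if "s \<le> T" for s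
      unfolding u_def using dv[OF that]
      by (auto intro!: derivative_eq_intros simp: algebra_simps)
    have key: "v s \<ge> 1" if s: "s \<le> t" for s
    proof -
      have D: "\<exists>y. (u has_real_derivative y) (at x) \<and> y \<le> 0" if x: "s \<le> x" "x \<le> t" for x
      proof -
        have "a * (v x - H/a) = a * v x - H" using a by (simp add: field_simps)
        hence "a * (v x - H/a) + v2 x \<le> 0" using h[of x] x t by (simp add: abs_le_iff)
        hence "exp (a * x) * (a * (v x - H/a) + v2 x) \<le> 0" by (simp add: mult_nonneg_nonpos)
        thus ?thesis using du[of x] x t by auto
      qed
      have "u t \<le> u s" by (rule DERIV_nonpos_imp_nonincreasing[OF s D])
      hence "exp (a * t) * (v t - H/a) \<le> exp (a * s) * (v s - H/a)" by (simp add: u_def)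
      moreover have "exp (a * s) \<le> exp (a * t)" using s a by simp
      moreover have "v t - H/a > 1" using vt by simp
      ultimately have "exp (a * s) * 1 \<le> exp (a * s) * (v s - H/a)"
      proof -
        assume A: "exp (a * t) * (v t - H/a) \<le> exp (a * s) * (v s - H/a)" "exp (a * s) \<le> exp (a * t)" "v t - H/a > 1"
        have "exp (a * s) * 1 \<le> exp (a * s) * (v t - H/a)" using A(3) by (intro mult_left_mono) auto
        also have "\<dots> \<le> exp (a * t) * (v t - H/a)" using A(2,3) by (intro mult_right_mono) auto
        finally show ?thesis using A(1) by linarith
      qed
      hence "1 \<le> v s - H/a" by (subst (asm) mult_le_cancel_left) auto
      moreover have "H/a \<ge> 0" using a h[of t] t by (intro divide_nonneg_pos) (auto intro: order_trans[OF abs_ge_zero])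
      ultimately show ?thesis by linarith
    qed
    define s where "s = t - M - 1"
    have "w t - w s \<ge> t - s"
    proof -
      have "(\<lambda>x. w x - x) s \<le> (\<lambda>x. w x - x) t"
        apply (rule DERIV_nonneg_imp_nondecreasing[of s t])
        using wle[of t] wpos[of t] t apply (simp add: s_def)
        subgoal for x apply (rule exI[of _ "v x - 1"])
          using dw[of x] key[of x] t by (auto intro!: derivative_eq_intros)
        done
      thus ?thesis by simp
    qed
    thus False using wpos[of s] wle[of t] wpos[of t] t by (simp add: s_def)
  next
    assume vt: "v t < -(H/a + 1)"
    define u where "u = (\<lambda>s. exp (a * s) * (v s + H/a))"
    have du: "(u has_real_derivative exp (a * s) * (a * (v s + H/a) + v2 s)) (at s)" if "s \<le> T" for s
      unfolding u_def using dv[OF that]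
      by (auto intro!: derivative_eq_intros simp: algebra_simps)
    have key: "v s \<le> -1" if s: "s \<le> t" for s
    proof -
      have D: "\<exists>y. (u has_real_derivative y) (at x) \<and> y \<ge> 0" if x: "s \<le> x" "x \<le> t" for x
      proof -
        have "a * (v x + H/a) = a * v x + H" using a by (simp add: field_simps)
        hence "a * (v x + H/a) + v2 x \<ge> 0" using h[of x] x t by (simp add: abs_le_iff)
        hence "exp (a * x) * (a * (v x + H/a) + v2 x) \<ge> 0" by simp
        thus ?thesis using du[of x] x t by auto
      qed
      have "u s \<le> u t" by (rule DERIV_nonneg_imp_nondecreasing[OF s D])
      hence "exp (a * s) * (v s + H/a) \<le> exp (a * t) * (v t + H/a)" by (simp add: u_def)
      moreover have "exp (a * s) \<le> exp (a * t)" using s a by simp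
      moreover have "v t + H/a < -1" using vt by simp
      ultimately have "exp (a * s) * (v s + H/a) \<le> exp (a * s) * (-1)"
      proof -
        assume A: "exp (a * s) * (v s + H/a) \<le> exp (a * t) * (v t + H/a)" "exp (a * s) \<le> exp (a * t)" "v t + H/a < -1"
        have "exp (a * t) * (v t + H/a) \<le> exp (a * s) * (v t + H/a)" using A(2,3) by (intro mult_right_mono_neg) auto
        also have "\<dots> \<le> exp (a * s) * (-1)" using A(3) by (intro mult_left_mono) auto
        finally show ?thesis using A(1) by linarith
      qed
      hence "v s + H/a \<le> -1" by (subst (asm) mult_le_cancel_left) auto
      moreover have "H/a \<ge> 0" using a h[of t] t by (intro divide_nonneg_pos) (auto intro: order_trans[OF abs_ge_zero])
      ultimately show ?thesis by linarith
    qed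
    define s where "s = t - M - 1"
    have "w s - w t \<ge> t - s"
    proof -
      have "(\<lambda>x. w x + x) t \<le> (\<lambda>x. w x + x) s"
        apply (rule DERIV_nonpos_imp_nonincreasing[of s t])
        using wle[of t] wpos[of t] t apply (simp add: s_def)
        subgoal for x apply (rule exI[of _ "v x + 1"])
          using dw[of x] key[of x] t by (auto intro!: derivative_eq_intros)
        done
      thus ?thesis by simp
    qed
    thus False using wpos[of t] wle[of s] wle[of t] t by (simp add: s_def)
  qed
qed




lemma lyap_alg:
  fixes v ph e q a d P :: real
  assumes a: "a > 0" and d: "d > 0" and q: "\<bar>q\<bar> \<le> P" and dP: "d * P \<le> a/4" and da: "d * a \<le> 1/4"
  shows "v * (-a * v - ph - e) + ph * v + d * ((-a * v - ph - e) * ph + v * (q * v))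
         \<le> -(a/4) * v^2 - (d/2) * ph^2 + (1/a + d) * e^2"
proof -
  have s1: "0 \<le> (a/4) * v^2 + v * e + e^2/a"
  proof -
    have "0 \<le> (a/4) * (v + 2 * e/a)^2" using a by simp
    also have "(a/4) * (v + 2 * e/a)^2 = (a/4) * v^2 + v * e + e^2/a" using a by (simp add: field_simps power2_eq_square)
    finally show ?thesis .
  qed
  have s2: "0 \<le> (a/4) * v^2 + a * d * v * ph + a * d^2 * ph^2"
  proof -
    have "0 \<le> (a/4) * (v + 2 * d * ph)^2" using a by simp
    also have "(a/4) * (v + 2 * d * ph)^2 = (a/4) * v^2 + a * d * v * ph + a * d^2 * ph^2" by (simp add: field_simps power2_eq_square)
    finally show ?thesis .
  qed
  have s3: "0 \<le> (d/4) * ph^2 + d * ph * e + d * e^2"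
  proof -
    have "0 \<le> d * (ph/2 + e)^2" using d by simp
    also have "d * (ph/2 + e)^2 = (d/4) * ph^2 + d * ph * e + d * e^2" by (simp add: field_simps power2_eq_square)
    finally show ?thesis .
  qed
  have s4: "a * d^2 * ph^2 \<le> (d/4) * ph^2"
  proof -
    have "a * d^2 * ph^2 = (d * a) * (d * ph^2)" by (simp add: power2_eq_square)
    also have "\<dots> \<le> (1/4) * (d * ph^2)" using da d by (intro mult_right_mono) auto
    finally show ?thesis by simp
  qed
  have s5: "d * q * v^2 \<le> (a/4) * v^2"
  proof -
    have "d * q \<le> d * P" using q d by (intro mult_left_mono) auto
    hence "d * q \<le> a/4" using dP by linarith
    thus ?thesis by (intro mult_right_mono) auto
  qed
  have e: "v * (-a * v - ph - e) + ph * v + d * ((-a * v - ph - e) * ph + v * (q * v))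
     = -a * v^2 - v * e - a * d * v * ph - d * ph^2 - d * ph * e + d * q * v^2"
    by (simp add: algebra_simps power2_eq_square)
  have "e^2/a = (1/a) * e^2" by simp
  show ?thesis unfolding e using s1 s2 s3 s4 s5 by (simp add: algebra_simps)
qed

locale osc =
  fixes a k0 p g Ap M B T :: real and w v v2 e :: "real \<Rightarrow> real"
  assumes a_pos: "a > 0" and k0_pos: "k0 > 0" and p_gt: "p > 1" and g_pos: "g > 0"
    and Ap_eq: "Ap = k0 * g powr (p - 1)"
    and dw: "\<And>t. t \<le> T \<Longrightarrow> (w has_real_derivative v t) (at t)"
    and dv: "\<And>t. t \<le> T \<Longrightarrow> (v has_real_derivative v2 t) (at t)"
    and eqn: "\<And>t. t \<le> T \<Longrightarrow> v2 t = -a * v t + Ap * w t - k0 * w t powr p - e t"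
    and wpos: "\<And>t. t \<le> T \<Longrightarrow> 0 < w t" and wle: "\<And>t. t \<le> T \<Longrightarrow> w t \<le> M"
    and vle: "\<And>t. t \<le> T \<Longrightarrow> \<bar>v t\<bar> \<le> B"
    and elim: "(e \<longlongrightarrow> 0) at_bot"
begin

definition "phi x = -Ap * x + k0 * x powr p"
definition "Phi x = -Ap * x^2 / 2 + k0 * x powr (p+1) / (p+1)"
definition "dphi x = -Ap + k0 * p * x powr (p - 1)"
definition "P = Ap + k0 * p * M powr (p - 1)"
definition "del = min (a / (4 * (P + 1))) (1 / (4 * a))"
definition "c = min (a/4) (del/2)"
definition "K1 = 1/a + del"
definition "V t = (v t)^2 / 2 + Phi (w t) + del * v t * phi (w t)"
definition "D t = (v t)^2 + (phi (w t))^2"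
definition "V' t = v t * v2 t + phi (w t) * v t + del * (v2 t * phi (w t) + v t * (dphi (w t) * v t))"

lemma Ap_pos: "Ap > 0" using k0_pos g_pos by (simp add: Ap_eq)

lemma phi_deriv: "x > 0 \<Longrightarrow> (phi has_real_derivative dphi x) (at x)"
  unfolding phi_def dphi_def
  by (auto intro!: derivative_eq_intros simp: powr_diff)

lemma Phi_deriv: "x > 0 \<Longrightarrow> (Phi has_real_derivative phi x) (at x)"
proof -
  assume x: "x > 0"
  have "p + 1 \<noteq> 0" using p_gt by simp
  have e: "k0 * ((p + 1) * x powr p) / (p + 1) = k0 * x powr p" using \<open>p + 1 \<noteq> 0\<close> by simp
  show ?thesis unfolding phi_def Phi_def using p_gt x
    apply (intro derivative_eq_intros refl)
    apply (auto simp: e)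
    done
qed

lemma M_pos: "M > 0" using wpos[of T] wle[of T] by simp

lemma P_pos: "P > 0"
  unfolding P_def using Ap_pos k0_pos p_gt by (simp add: add_pos_nonneg)

lemma dphi_bound: "0 < x \<Longrightarrow> x \<le> M \<Longrightarrow> \<bar>dphi x\<bar> \<le> P"
proof -
  assume x: "0 < x" "x \<le> M"
  have "x powr (p-1) \<le> M powr (p-1)" using x p_gt by (intro powr_mono2) auto
  hence "k0 * p * x powr (p - 1) \<le> k0 * p * M powr (p - 1)" using k0_pos p_gt by simp
  moreover have "0 \<le> k0 * p * x powr (p - 1)" using k0_pos p_gt by simp
  ultimately show ?thesis unfolding dphi_def P_def using Ap_pos by (simp add: abs_le_iff)
qed

lemma del_pos: "del > 0" unfolding del_def using a_pos P_pos by simp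
lemma c_pos: "c > 0" unfolding c_def using a_pos del_pos by simp

lemma V_deriv: "t \<le> T \<Longrightarrow> (V has_real_derivative V' t) (at t)"
proof -
  assume t: "t \<le> T"
  have "((\<lambda>s. Phi (w s)) has_real_derivative phi (w t) * v t) (at t)"
    using DERIV_chain2[OF Phi_deriv[OF wpos[OF t]] dw[OF t]] .
  moreover have "((\<lambda>s. phi (w s)) has_real_derivative dphi (w t) * v t) (at t)"
    using DERIV_chain2[OF phi_deriv[OF wpos[OF t]] dw[OF t]] .
  ultimately show ?thesis unfolding V_def V'_def using dv[OF t]
    by (auto intro!: derivative_eq_intros simp: algebra_simps)
qed

lemma V'_le: "t \<le> T \<Longrightarrow> V' t \<le> -c * D t + K1 * (e t)^2"
proof -
  assume t: "t \<le> T"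
  have v2e: "v2 t = -a * v t - phi (w t) - e t" using eqn[OF t] by (simp add: phi_def)
  have dP: "del * P \<le> a/4"
  proof -
    have "del * P \<le> a / (4 * (P + 1)) * P" using P_pos by (intro mult_right_mono) (auto simp: del_def)
    also have "\<dots> \<le> a / (4 * (P + 1)) * (P + 1)" using a_pos P_pos by (intro mult_left_mono) auto
    also have "\<dots> = a/4" using P_pos by (simp add: field_simps)
    finally show ?thesis .
  qed
  have da: "del * a \<le> 1/4"
  proof -
    have "del * a \<le> 1 / (4 * a) * a" using a_pos by (intro mult_right_mono) (auto simp: del_def)
    thus ?thesis using a_pos by simp
  qed
  have "V' t \<le> -(a/4) * (v t)^2 - (del/2) * (phi (w t))^2 + (1/a + del) * (e t)^2"
    unfolding V'_def v2e
    by (rule lyap_alg[OF a_pos del_pos dphi_bound[OF wpos[OF t] wle[OF t]] dP da])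
  moreover have "-(a/4) * (v t)^2 \<le> -c * (v t)^2" unfolding c_def by (intro mult_right_mono) auto
  moreover have "-(del/2) * (phi (w t))^2 \<le> -c * (phi (w t))^2" unfolding c_def by (intro mult_right_mono) auto
  ultimately show ?thesis unfolding D_def K1_def by (simp add: algebra_simps)
qed

end



context osc begin

lemma powr_p_split: "x > 0 \<Longrightarrow> x powr p = x * x powr (p - 1)"
  by (simp add: powr_mult_base)

lemma phi_factor: "x > 0 \<Longrightarrow> phi x = k0 * x * (x powr (p - 1) - g powr (p - 1))"
proof -
  assume x: "x > 0"
  have "phi x = -Ap * x + k0 * (x * x powr (p - 1))" using x by (simp add: phi_def powr_p_split)
  thus ?thesis by (simp add: Ap_eq algebra_simps)
qed

lemma phi_g: "phi g = 0" using phi_factor[OF g_pos] by simp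

lemma phi_neg: "0 < x \<Longrightarrow> x < g \<Longrightarrow> phi x < 0"
proof -
  assume x: "0 < x" "x < g"
  have "x powr (p - 1) < g powr (p - 1)" using x p_gt by (intro powr_less_mono2) auto
  thus ?thesis using x k0_pos by (simp add: phi_factor mult_pos_neg)
qed

lemma phi_pos: "g < x \<Longrightarrow> phi x > 0"
proof -
  assume x: "g < x"
  have "g powr (p - 1) < x powr (p - 1)" using x g_pos p_gt by (intro powr_less_mono2) auto
  thus ?thesis using x g_pos k0_pos by (simp add: phi_factor)
qed

lemma Phi_isCont: "x > 0 \<Longrightarrow> isCont Phi x"
  using Phi_deriv DERIV_isCont by blast
lemma phi_isCont: "x > 0 \<Longrightarrow> isCont phi x"
  using phi_deriv DERIV_isCont by blast

lemma Phi_contI: "0 < x \<Longrightarrow> continuous_on {x..y} Phi"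
  by (intro continuous_at_imp_continuous_on ballI Phi_isCont) auto

lemma Phi_nonincr: "0 < x \<Longrightarrow> x \<le> y \<Longrightarrow> y \<le> g \<Longrightarrow> Phi y \<le> Phi x"
proof -
  assume xy: "0 < x" "x \<le> y" "y \<le> g"
  have D: "\<exists>z. (Phi has_real_derivative z) (at t) \<and> z \<le> 0" if "x < t" "t < y" for t
  proof -
    have "0 < t" "t < g" using that xy by auto
    thus ?thesis using Phi_deriv[of t] phi_neg[of t] by (intro exI[of _ "phi t"]) simp
  qed
  have C: "continuous_on {x..y} Phi" using xy by (intro Phi_contI) auto
  show ?thesis by (rule DERIV_nonpos_imp_decreasing_open[OF xy(2) D C])
qed

lemma Phi_nondecr: "g \<le> x \<Longrightarrow> x \<le> y \<Longrightarrow> Phi x \<le> Phi y"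
proof -
  assume xy: "g \<le> x" "x \<le> y"
  have D: "\<exists>z. (Phi has_real_derivative z) (at t) \<and> z \<ge> 0" if "x < t" "t < y" for t
  proof -
    have "g < t" using that xy by simp
    thus ?thesis using Phi_deriv[of t] phi_pos[of t] g_pos by (intro exI[of _ "phi t"]) simp
  qed
  have C: "continuous_on {x..y} Phi" using g_pos xy by (intro Phi_contI) auto
  show ?thesis by (rule DERIV_nonneg_imp_increasing_open[OF xy(2) D C])
qed

lemma Phi_strict_left: "0 < x \<Longrightarrow> x < g \<Longrightarrow> Phi g < Phi x"
proof -
  assume xy: "0 < x" "x < g"
  have D: "\<exists>z. (Phi has_real_derivative z) (at t) \<and> z < 0" if "x < t" "t < g" for t
  proof -
    have "0 < t" "t < g" using that xy by auto
    thus ?thesis using Phi_deriv[of t] phi_neg[of t] by (intro exI[of _ "phi t"]) simp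
  qed
  have C: "continuous_on {x..g} Phi" using xy by (intro Phi_contI) auto
  show ?thesis by (rule DERIV_neg_imp_decreasing_open[OF xy(2) D C])
qed

lemma Phi_strict_right: "g < x \<Longrightarrow> Phi g < Phi x"
proof -
  assume xy: "g < x"
  have D: "\<exists>z. (Phi has_real_derivative z) (at t) \<and> z > 0" if "g < t" "t < x" for t
  proof -
    have "0 < t" "g < t" using that g_pos by auto
    thus ?thesis using Phi_deriv[of t] phi_pos[of t] by (intro exI[of _ "phi t"]) simp
  qed
  have C: "continuous_on {g..x} Phi" using g_pos by (intro Phi_contI) auto
  show ?thesis by (rule DERIV_pos_imp_increasing_open[OF xy D C])
qed

lemma Phi_neg: "0 < x \<Longrightarrow> x \<le> g \<Longrightarrow> Phi x < 0"
proof -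
  assume x: "0 < x" "x \<le> g"
  have "x powr (p + 1) = x powr 2 * x powr (p - 1)" using powr_add[of x 2 "p - 1"] by (simp add: add.commute)
  also have "x powr 2 = x^2" using x by (simp add: powr_numeral)
  finally have "x powr (p + 1) = x^2 * x powr (p - 1)" .
  moreover have "x powr (p - 1) \<le> g powr (p - 1)" using x p_gt by (intro powr_mono2) auto
  ultimately have "k0 * x powr (p + 1) \<le> Ap * x^2"
    unfolding Ap_eq using k0_pos by (simp add: mult_left_mono mult.commute mult.left_commute)
  hence "Phi x \<le> -Ap * x^2 / 2 + Ap * x^2 / (p + 1)"
    unfolding Phi_def using p_gt by (simp add: divide_right_mono)
  also have "\<dots> < 0"
  proof -
    have "Ap * x^2 > 0" using Ap_pos x by simp
    moreover have "1 / (p + 1) < 1/2" using p_gt by (simp add: field_simps)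
    ultimately have "Ap * x^2 * (1/(p+1)) < Ap * x^2 * (1/2)" by (intro mult_strict_left_mono) auto
    thus ?thesis by simp
  qed
  finally show ?thesis .
qed


definition "mm eta = min (k0 * eta * (g powr (p - 1) - (g - eta) powr (p - 1))) (k0 * g * ((g + eta) powr (p - 1) - g powr (p - 1)))"

lemma mm_pos: "0 < eta \<Longrightarrow> 2 * eta < g \<Longrightarrow> mm eta > 0"
proof -
  assume e: "0 < eta" "2 * eta < g"
  have "(g - eta) powr (p - 1) < g powr (p - 1)" using e p_gt by (intro powr_less_mono2) auto
  moreover have "g powr (p - 1) < (g + eta) powr (p - 1)" using e p_gt g_pos by (intro powr_less_mono2) auto
  ultimately show ?thesis unfolding mm_def using e k0_pos g_pos by simp
qed

lemma phi_lower: "0 < eta \<Longrightarrow> 2 * eta < g \<Longrightarrow> eta \<le> x \<Longrightarrow> eta \<le> \<bar>x - g\<bar> \<Longrightarrow> mm eta \<le> \<bar>phi x\<bar>"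
proof -
  assume e: "0 < eta" "2 * eta < g" "eta \<le> x" "eta \<le> \<bar>x - g\<bar>"
  have x0: "x > 0" using e by simp
  show ?thesis
  proof (cases "x < g")
    case True
    hence xg: "x \<le> g - eta" using e by simp
    have m1: "x powr (p - 1) \<le> (g - eta) powr (p - 1)" using xg x0 p_gt by (intro powr_mono2) auto
    have m2: "(g - eta) powr (p - 1) \<le> g powr (p - 1)" using e p_gt by (intro powr_mono2) auto
    have "k0 * eta * (g powr (p - 1) - (g - eta) powr (p - 1)) \<le> k0 * x * (g powr (p - 1) - x powr (p - 1))"
      using e k0_pos m1 m2 by (intro mult_mono) auto
    moreover have "\<bar>phi x\<bar> = k0 * x * (g powr (p - 1) - x powr (p - 1))"
      using phi_neg[OF x0 True] phi_factor[OF x0] by (simp add: algebra_simps)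
    ultimately show ?thesis unfolding mm_def by simp
  next
    case False
    hence xg: "x \<ge> g + eta" using e by simp
    have m1: "(g + eta) powr (p - 1) \<le> x powr (p - 1)" using xg g_pos e p_gt by (intro powr_mono2) auto
    have m2: "g powr (p - 1) \<le> (g + eta) powr (p - 1)" using e g_pos p_gt by (intro powr_mono2) auto
    have "k0 * g * ((g + eta) powr (p - 1) - g powr (p - 1)) \<le> k0 * x * (x powr (p - 1) - g powr (p - 1))"
      using e k0_pos g_pos xg m1 m2 by (intro mult_mono) auto
    moreover have "\<bar>phi x\<bar> = k0 * x * (x powr (p - 1) - g powr (p - 1))"
      using phi_pos[of x] xg e phi_factor[OF x0] by simp
    ultimately show ?thesis unfolding mm_def by simp
  qed
qed

lemma near_g: "\<sigma> > 0 \<Longrightarrow> \<exists>eta>0. \<forall>x. \<bar>x - g\<bar> \<le> eta \<longrightarrow> \<bar>Phi x - Phi g\<bar> \<le> \<sigma> \<and> \<bar>phi x\<bar> \<le> 1"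
proof -
  assume s: "\<sigma> > 0"
  obtain d1 where d1: "d1 > 0" "\<And>x. dist x g < d1 \<Longrightarrow> dist (Phi x) (Phi g) < \<sigma>"
    using Phi_isCont[OF g_pos] s unfolding continuous_at_eps_delta by blast
  obtain d2 where d2: "d2 > 0" "\<And>x. dist x g < d2 \<Longrightarrow> dist (phi x) (phi g) < 1"
    using phi_isCont[OF g_pos] unfolding continuous_at_eps_delta by (metis zero_less_one)
  show ?thesis
  proof (intro exI[of _ "min d1 d2 / 2"] conjI allI impI)
    show "min d1 d2 / 2 > 0" using d1 d2 by simp
    fix x assume x: "\<bar>x - g\<bar> \<le> min d1 d2 / 2"
    have "dist x g < d1" "dist x g < d2" using x d1 d2 by (auto simp: dist_real_def)
    thus "\<bar>Phi x - Phi g\<bar> \<le> \<sigma>" "\<bar>phi x\<bar> \<le> 1" using d1 d2 phi_g by (auto simp: dist_real_def less_imp_le)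
  qed
qed

lemma small_bounds:
  assumes x: "0 < x" "x \<le> eta" "eta \<le> 1"
  shows "\<bar>Phi x\<bar> \<le> (Ap + k0) * eta" "\<bar>phi x\<bar> \<le> (Ap + k0) * eta"
proof -
  have x1: "x \<le> 1" using x by simp
  have a1: "x powr (p + 1) \<le> x" using powr_mono'[of 1 "p+1" x] x1 x p_gt by simp
  have a2: "x powr p \<le> x" using powr_mono'[of 1 "p" x] x1 x p_gt by simp
  have a3: "x^2 \<le> x" using x1 x by (simp add: power2_eq_square mult_le_cancel_right1)
  have a4: "k0 * x powr (p + 1) / (p + 1) \<le> k0 * x powr (p + 1)"
  proof -
    have a0: "0 \<le> k0 * x powr (p + 1)" using k0_pos by simp
    have "k0 * x powr (p + 1) * 1 \<le> k0 * x powr (p + 1) * (p + 1)"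
      using a0 p_gt by (intro mult_left_mono) auto
    thus ?thesis using p_gt by (simp add: divide_le_eq)
  qed
  have "\<bar>Phi x\<bar> \<le> Ap * x^2 / 2 + k0 * x powr (p + 1) / (p + 1)"
    unfolding Phi_def using Ap_pos k0_pos p_gt by (simp add: abs_le_iff)
  also have "\<dots> \<le> Ap * x + k0 * x"
  proof -
    have "Ap * x^2 \<le> Ap * x" using a3 Ap_pos by (intro mult_left_mono) auto
    moreover have "k0 * x powr (p+1) \<le> k0 * x" using a1 k0_pos by (intro mult_left_mono) auto
    moreover have "0 \<le> Ap * x^2" using Ap_pos by simp
    ultimately show ?thesis using a4 by linarith
  qed
  also have "\<dots> \<le> (Ap + k0) * eta" using x Ap_pos k0_pos by (simp add: distrib_right mult_left_mono add_mono)
  finally show "\<bar>Phi x\<bar> \<le> (Ap + k0) * eta" .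
  have "\<bar>phi x\<bar> \<le> Ap * x + k0 * x powr p"
    unfolding phi_def using Ap_pos k0_pos x by (simp add: abs_le_iff)
  also have "\<dots> \<le> Ap * x + k0 * x" using a2 k0_pos by simp
  also have "\<dots> \<le> (Ap + k0) * eta" using x Ap_pos k0_pos by (simp add: distrib_right mult_left_mono add_mono)
  finally show "\<bar>phi x\<bar> \<le> (Ap + k0) * eta" .
qed

definition "VB = B^2 + Ap * M^2 + k0 * M powr (p + 1) + del * B * (Ap * M + k0 * M powr p)"

lemma V_bound: "t \<le> T \<Longrightarrow> \<bar>V t\<bar> \<le> VB"
proof -
  assume t: "t \<le> T"
  define x where "x = w t"
  have x: "0 < x" "x \<le> M" using wpos[OF t] wle[OF t] by (auto simp: x_def)
  have b1: "x powr (p + 1) \<le> M powr (p + 1)" "x powr p \<le> M powr p" "x^2 \<le> M^2"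
    using x p_gt by (auto intro!: powr_mono2 power_mono)
  have a4: "k0 * x powr (p + 1) / (p + 1) \<le> k0 * x powr (p + 1)"
  proof -
    have a0: "0 \<le> k0 * x powr (p + 1)" using k0_pos by simp
    have "k0 * x powr (p + 1) * 1 \<le> k0 * x powr (p + 1) * (p + 1)"
      using a0 p_gt by (intro mult_left_mono) auto
    thus ?thesis using p_gt by (simp add: divide_le_eq)
  qed
  have P1: "\<bar>Phi x\<bar> \<le> Ap * M^2 + k0 * M powr (p + 1)"
  proof -
    have "\<bar>Phi x\<bar> \<le> Ap * x^2 / 2 + k0 * x powr (p + 1) / (p + 1)"
      unfolding Phi_def using Ap_pos k0_pos p_gt by (simp add: abs_le_iff)
    also have "\<dots> \<le> Ap * M^2 + k0 * M powr (p + 1)"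
    proof -
      have "Ap * x^2 \<le> Ap * M^2" using b1 Ap_pos by (intro mult_left_mono) auto
      moreover have "k0 * x powr (p+1) \<le> k0 * M powr (p+1)" using b1 k0_pos by (intro mult_left_mono) auto
      moreover have "0 \<le> Ap * x^2" using Ap_pos by simp
      ultimately show ?thesis using a4 by linarith
    qed
    finally show ?thesis .
  qed
  have P2: "\<bar>phi x\<bar> \<le> Ap * M + k0 * M powr p"
  proof -
    have "\<bar>phi x\<bar> \<le> Ap * x + k0 * x powr p"
      unfolding phi_def using Ap_pos k0_pos x by (simp add: abs_le_iff)
    also have "\<dots> \<le> Ap * M + k0 * M powr p" using b1 x Ap_pos k0_pos by (intro add_mono mult_left_mono) auto
    finally show ?thesis .
  qed
  have v1: "\<bar>v t\<bar> \<le> B" using vle[OF t] .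
  have v2: "(v t)^2 \<le> B^2" using v1 by (metis abs_ge_zero power2_abs power_mono)
  have "\<bar>del * v t * phi x\<bar> \<le> del * B * (Ap * M + k0 * M powr p)"
    using v1 P2 del_pos by (simp add: abs_mult mult_mono mult_left_mono mult.assoc)
  moreover have "\<bar>V t\<bar> \<le> (v t)^2/2 + \<bar>Phi x\<bar> + \<bar>del * v t * phi x\<bar>"
  proof -
    have "\<bar>(v t)^2/2\<bar> = (v t)^2/2" by simp
    thus ?thesis unfolding V_def x_def
      using abs_triangle_ineq[of "(v t)^2/2 + Phi (w t)" "del * v t * phi (w t)"]
        abs_triangle_ineq[of "(v t)^2/2" "Phi (w t)"] by linarith
  qed
  ultimately show ?thesis unfolding VB_def using P1 v2 zero_le_power2[of "v t"] by linarith
qed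

end



context osc begin

lemma cont_on_le:
  assumes d: "\<And>s. s \<le> T \<Longrightarrow> (f has_real_derivative f' s) (at s)"
  shows "continuous_on {..T} f"
  by (intro continuous_at_imp_continuous_on ballI) (use d DERIV_isCont in auto)

lemma cont_on_interval:
  assumes d: "\<And>s. s \<le> T \<Longrightarrow> (f has_real_derivative f' s) (at s)" and z: "z \<le> T"
  shows "continuous_on {y..z} f"
  using continuous_on_subset[OF cont_on_le[OF d]] z by auto

lemma closed_le_T:
  assumes d: "\<And>s. s \<le> T \<Longrightarrow> (f has_real_derivative f' s) (at s)"
    and d2: "\<And>s. s \<le> T \<Longrightarrow> (h has_real_derivative h' s) (at s)"
    and T': "T' \<le> T"
  shows "closed {t. t \<le> T' \<and> \<bar>f t\<bar> \<le> r1 \<and> \<bar>h t\<bar> \<le> r2}"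
proof -
  have cf0: "continuous_on UNIV (\<lambda>t. f (min t T))"
    by (intro continuous_on_compose2[OF cont_on_le[OF d]]) (auto intro!: continuous_intros)
  have ch0: "continuous_on UNIV (\<lambda>t. h (min t T))"
    by (intro continuous_on_compose2[OF cont_on_le[OF d2]]) (auto intro!: continuous_intros)
  have cf: "continuous_on UNIV (\<lambda>t. \<bar>f (min t T)\<bar>)" using cf0 by (intro continuous_intros)
  have ch: "continuous_on UNIV (\<lambda>t. \<bar>h (min t T)\<bar>)" using ch0 by (intro continuous_intros)
  have "{t. t \<le> T' \<and> \<bar>f t\<bar> \<le> r1 \<and> \<bar>h t\<bar> \<le> r2} =
     {t. t \<le> T'} \<inter> {t. \<bar>f (min t T)\<bar> \<le> r1} \<inter> {t. \<bar>h (min t T)\<bar> \<le> r2}"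
    using T' by (auto simp: min_def)
  moreover have "closed {t. \<bar>f (min t T)\<bar> \<le> r1}"
    by (rule closed_Collect_le[OF cf]) (auto intro: continuous_intros)
  moreover have "closed {t. \<bar>h (min t T)\<bar> \<le> r2}"
    by (rule closed_Collect_le[OF ch]) (auto intro: continuous_intros)
  moreover have "closed {t::real. t \<le> T'}" by (simp add: closed_Collect_le continuous_on_id continuous_on_const)
  ultimately show ?thesis by (simp add: closed_Int)
qed

lemma dwg: "t \<le> T \<Longrightarrow> ((\<lambda>s. w s - g) has_real_derivative v t) (at t)"
  using dw[of t] by (auto intro!: derivative_eq_intros)

end

locale osc2 = osc +
  fixes eta rho T' s0 s1 :: real
  assumes eta_pos: "eta > 0" and eta_g: "2 * eta < g" and T'_le: "T' \<le> T" and rho_pos: "rho > 0"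
    and offZ: "\<And>t. t \<le> T' \<Longrightarrow> \<not> (\<bar>v t\<bar> \<le> eta \<and> w t \<le> eta) \<Longrightarrow> \<not> (\<bar>v t\<bar> \<le> eta \<and> \<bar>w t - g\<bar> \<le> eta) \<Longrightarrow> rho \<le> D t"
    and small_e: "\<And>t. t \<le> T' \<Longrightarrow> K1 * (e t)^2 \<le> c / 2 * rho"
    and Z0b: "\<And>t. t \<le> T \<Longrightarrow> \<bar>v t\<bar> \<le> eta \<Longrightarrow> w t \<le> eta \<Longrightarrow> \<bar>V t\<bar> \<le> s0 \<and> -s0 \<le> Phi (w t)"
    and Zgb: "\<And>t. t \<le> T \<Longrightarrow> \<bar>v t\<bar> \<le> eta \<Longrightarrow> \<bar>w t - g\<bar> \<le> eta \<Longrightarrow> \<bar>V t - Phi g\<bar> \<le> s1 \<and> Phi (w t) \<le> Phi g + s1"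
    and sep: "s0 + s1 < - Phi g"
begin

definition "Z0 = {t. t \<le> T' \<and> \<bar>v t\<bar> \<le> eta \<and> \<bar>w t\<bar> \<le> eta}"
definition "Zg = {t. t \<le> T' \<and> \<bar>v t\<bar> \<le> eta \<and> \<bar>w t - g\<bar> \<le> eta}"
definition "Z = Z0 \<union> Zg"

lemma Z0_iff: "t \<in> Z0 \<longleftrightarrow> t \<le> T' \<and> \<bar>v t\<bar> \<le> eta \<and> w t \<le> eta"
  unfolding Z0_def using wpos[of t] T'_le by auto

lemma closed_Z0: "closed Z0" unfolding Z0_def by (rule closed_le_T[OF dv dw T'_le])
lemma closed_Zg: "closed Zg" unfolding Zg_def by (rule closed_le_T[OF dv dwg T'_le])
lemma closed_Z: "closed Z" unfolding Z_def using closed_Z0 closed_Zg by (rule closed_Un)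

lemma disj: "t \<in> Z0 \<Longrightarrow> t \<notin> Zg"
  unfolding Z0_iff Zg_def using eta_g by auto

lemma Z_le: "t \<in> Z \<Longrightarrow> t \<le> T'" unfolding Z_def Z0_def Zg_def by auto

lemma V_cont: "z \<le> T \<Longrightarrow> continuous_on {y..z} V" by (rule cont_on_interval[OF V_deriv])

lemma gap:
  assumes z12: "z1 < z2" "z2 \<le> T'" and free: "\<And>s. z1 < s \<Longrightarrow> s < z2 \<Longrightarrow> s \<notin> Z"
    and t: "z1 \<le> t" "t \<le> z2"
  shows "V z2 \<le> V t" "V t \<le> V z1" "Phi (w t) \<le> Phi (w z1) + (V z1 - V t) / c"
    "Phi (w z1) - (V z1 - V t) / c \<le> Phi (w t)"
proof -
  have inT: "s \<le> T" if "s \<le> z2" for s using that z12 T'_le by simp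
  have Dle: "V' s \<le> -(c/2) * D s" if s: "z1 < s" "s < z2" for s
  proof -
    have sT: "s \<le> T'" using s z12 by simp
    have "s \<notin> Z" using free s .
    hence "rho \<le> D s" using offZ[OF sT] sT by (auto simp: Z_def Z0_iff Zg_def)
    hence "c/2 * rho \<le> c/2 * D s" using c_pos by (intro mult_left_mono) auto
    thus ?thesis using V'_le[OF inT[of s]] small_e[OF sT] s by (simp add: algebra_simps)
  qed
  have Dnn: "0 \<le> D s" for s unfolding D_def by simp
  have Vdec: "\<exists>y. (V has_real_derivative y) (at s) \<and> y \<le> 0" if "z1 < s" "s < z2" for s
  proof -
    have "-(c/2) * D s \<le> 0" using c_pos Dnn[of s] by (simp add: mult_nonneg_nonneg)
    thus ?thesis using Dle[OF that] V_deriv[OF inT[of s]] that by (intro exI[of _ "V' s"]) auto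
  qed
  show "V z2 \<le> V t"
    by (rule DERIV_nonpos_imp_decreasing_open[OF t(2)]) (use Vdec t in auto, rule V_cont[OF inT], simp)
  show "V t \<le> V z1"
    by (rule DERIV_nonpos_imp_decreasing_open[OF t(1)]) (use Vdec t in auto, rule V_cont[OF inT], use t in simp)
  have dPw: "((\<lambda>s. Phi (w s)) has_real_derivative phi (w s) * v s) (at s)" if "s \<le> T" for s
    using DERIV_chain2[OF Phi_deriv[OF wpos[OF that]] dw[OF that]] .
  have dU1: "((\<lambda>s. Phi (w s) - V s / c) has_real_derivative phi (w s) * v s - V' s / c) (at s)" if "s \<le> T" for s
    using dPw[OF that] V_deriv[OF that] c_pos by (auto intro!: derivative_eq_intros)
  have dU2: "((\<lambda>s. Phi (w s) + V s / c) has_real_derivative phi (w s) * v s + V' s / c) (at s)" if "s \<le> T" for s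
    using dPw[OF that] V_deriv[OF that] c_pos by (auto intro!: derivative_eq_intros)
  have amgm: "\<bar>phi (w s) * v s\<bar> \<le> D s / 2" for s
  proof -
    have "0 \<le> (\<bar>phi (w s)\<bar> - \<bar>v s\<bar>)^2" by simp
    hence "2 * (\<bar>phi (w s)\<bar> * \<bar>v s\<bar>) \<le> (phi (w s))^2 + (v s)^2"
      by (simp add: power2_eq_square algebra_simps)
    thus ?thesis unfolding D_def by (simp add: abs_mult)
  qed
  have key: "D s / 2 \<le> - V' s / c" if "z1 < s" "s < z2" for s
  proof -
    have "c * (D s / 2) \<le> - V' s" using Dle[OF that] by (simp add: algebra_simps)
    thus ?thesis using c_pos by (simp add: field_simps)
  qed
  have U1: "\<exists>y. ((\<lambda>s. Phi (w s) - V s / c) has_real_derivative y) (at s) \<and> y \<ge> 0" if "z1 < s" "s < t" for s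
  proof -
    have s2: "s < z2" using that t by simp
    have "- (phi (w s) * v s) \<le> \<bar>phi (w s) * v s\<bar>" by simp
    moreover have "- V' s / c = - (V' s / c)" by simp
    ultimately have "0 \<le> phi (w s) * v s - V' s / c" using key[OF that(1) s2] amgm[of s] by linarith
    thus ?thesis using dU1[OF inT[of s]] s2 by (intro exI[of _ "phi (w s) * v s - V' s / c"]) auto
  qed
  have U2: "\<exists>y. ((\<lambda>s. Phi (w s) + V s / c) has_real_derivative y) (at s) \<and> y \<le> 0" if "z1 < s" "s < t" for s
  proof -
    have s2: "s < z2" using that t by simp
    have "-V' s / c = - (V' s / c)" by simp
    moreover have "phi (w s) * v s \<le> \<bar>phi (w s) * v s\<bar>" by simp
    ultimately have "phi (w s) * v s + V' s / c \<le> 0" using key[OF that(1) s2] amgm[of s] by linarith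
    thus ?thesis using dU2[OF inT[of s]] s2 by (intro exI[of _ "phi (w s) * v s + V' s / c"]) auto
  qed
  have "Phi (w z1) - V z1 / c \<le> Phi (w t) - V t / c"
    by (rule DERIV_nonneg_imp_increasing_open[OF t(1) U1]) (auto intro: cont_on_interval[OF dU1 inT[OF t(2)]])
  thus "Phi (w z1) - (V z1 - V t) / c \<le> Phi (w t)" by (simp add: diff_divide_distrib)
  have "Phi (w t) + V t / c \<le> Phi (w z1) + V z1 / c"
    by (rule DERIV_nonpos_imp_decreasing_open[OF t(1) U2]) (auto intro: cont_on_interval[OF dU2 inT[OF t(2)]])
  thus "Phi (w t) \<le> Phi (w z1) + (V z1 - V t) / c" by (simp add: diff_divide_distrib)
qed

end



context osc2 begin

lemma VB_nonneg: "0 \<le> VB" using V_bound[of T] by simp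

lemma noZfree: assumes s: "s \<le> T'" shows "\<exists>z\<in>Z. z \<le> s"
proof (rule ccontr)
  assume "\<not> (\<exists>z\<in>Z. z \<le> s)"
  hence nz: "t \<notin> Z" if "t \<le> s" for t using that by auto
  have Dl: "V' t \<le> -(c/2) * rho" if t: "t \<le> s" for t
  proof -
    have tT: "t \<le> T'" using t s by simp
    have "rho \<le> D t" using offZ[OF tT] nz[OF t] tT by (auto simp: Z_def Z0_iff Zg_def)
    hence "c * rho \<le> c * D t" using c_pos by (intro mult_left_mono) auto
    thus ?thesis using V'_le[of t] small_e[OF tT] tT T'_le by (simp add: algebra_simps)
  qed
  define L where "L = (4 * VB + 1) / (c * rho)"
  have Lpos: "L > 0" unfolding L_def using VB_nonneg c_pos rho_pos by simp
  have Dx: "\<exists>y. ((\<lambda>x. V x + c / 2 * rho * x) has_real_derivative y) (at x) \<and> y \<le> 0"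
    if x: "s - L \<le> x" "x \<le> s" for x
    using V_deriv[of x] x s T'_le Dl[of x]
    by (intro exI[of _ "V' x + c/2 * rho"]) (auto intro!: derivative_eq_intros)
  have "(\<lambda>x. V x + c / 2 * rho * x) s \<le> (\<lambda>x. V x + c / 2 * rho * x) (s - L)"
    by (rule DERIV_nonpos_imp_nonincreasing[of "s - L" s, OF _ Dx]) (use Lpos in auto)
  hence "V s + (c/2) * rho * L \<le> V (s - L)" by (simp add: algebra_simps diff_divide_distrib add_divide_distrib)
  moreover have "(c/2) * rho * L = (4 * VB + 1) / 2" unfolding L_def using c_pos rho_pos by (simp add: field_simps)
  moreover have "\<bar>V s\<bar> \<le> VB" "\<bar>V (s - L)\<bar> \<le> VB" using V_bound s T'_le Lpos by auto
  ultimately show False by (simp add: abs_le_iff)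
qed

lemma bracket:
  assumes t: "t \<le> T'" "t \<notin> Z" and lo: "zl \<in> Z" "zl \<le> t" and hi: "zu \<in> Z" "t \<le> zu"
  shows "\<exists>z1 z2. z1 \<in> Z \<and> z2 \<in> Z \<and> z1 < t \<and> t < z2 \<and> z2 \<le> zu \<and> (\<forall>s. z1 < s \<and> s < z2 \<longrightarrow> s \<notin> Z)"
proof -
  define A where "A = Z \<inter> {..t}"
  define B where "B = Z \<inter> {t..}"
  have cA: "closed A" unfolding A_def using closed_Z by (intro closed_Int) auto
  have cB: "closed B" unfolding B_def using closed_Z by (intro closed_Int) auto
  have neA: "A \<noteq> {}" using lo unfolding A_def by auto
  have neB: "B \<noteq> {}" using hi unfolding B_def by auto
  have bA: "bdd_above A" unfolding A_def by (auto intro: bdd_aboveI[of _ t])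
  have bB: "bdd_below B" unfolding B_def by (auto intro: bdd_belowI[of _ t])
  define z1 where "z1 = Sup A"
  define z2 where "z2 = Inf B"
  have z1A: "z1 \<in> A" unfolding z1_def by (rule closed_contains_Sup[OF neA bA cA])
  have z2B: "z2 \<in> B" unfolding z2_def by (rule closed_contains_Inf[OF neB bB cB])
  have "z1 \<noteq> t" "z2 \<noteq> t" using z1A z2B t(2) unfolding A_def B_def by auto
  hence lt: "z1 < t" "t < z2" using z1A z2B unfolding A_def B_def by auto
  have "z2 \<le> zu" unfolding z2_def using hi bB by (intro cInf_lower) (auto simp: B_def)
  moreover have "s \<notin> Z" if s: "z1 < s" "s < z2" for s
  proof
    assume sZ: "s \<in> Z"
    show False
    proof (cases "s \<le> t")
      case True
      hence "s \<le> z1" unfolding z1_def using sZ bA by (intro cSup_upper) (auto simp: A_def)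
      thus False using s by simp
    next
      case False
      hence "z2 \<le> s" unfolding z2_def using sZ bB by (intro cInf_lower) (auto simp: B_def)
      thus False using s by simp
    qed
  qed
  ultimately show ?thesis using z1A z2B lt unfolding A_def B_def by blast
qed

lemma label_mono: assumes z: "z \<in> Zg" and z': "z' \<in> Z0" shows "z' < z"
proof (rule ccontr)
  assume "\<not> z' < z"
  hence zz: "z < z'" using disj[OF z'] z by (cases "z = z'") auto
  define S0 where "S0 = Z0 \<inter> {z..z'}"
  have cS0: "closed S0" unfolding S0_def using closed_Z0 by (intro closed_Int) auto
  have neS0: "S0 \<noteq> {}" using z' zz unfolding S0_def by auto
  have bS0: "bdd_below S0" unfolding S0_def by (auto intro: bdd_belowI[of _ z])
  define z2 where "z2 = Inf S0"
  have z2S: "z2 \<in> S0" unfolding z2_def by (rule closed_contains_Inf[OF neS0 bS0 cS0])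
  have "z2 \<noteq> z" using z2S disj z unfolding S0_def by auto
  hence zz2: "z < z2" "z2 \<le> z'" using z2S unfolding S0_def by auto
  define Sg where "Sg = Zg \<inter> {z..z2}"
  have cSg: "closed Sg" unfolding Sg_def using closed_Zg by (intro closed_Int) auto
  have neSg: "Sg \<noteq> {}" using z zz2 unfolding Sg_def by auto
  have bSg: "bdd_above Sg" unfolding Sg_def by (auto intro: bdd_aboveI[of _ z2])
  define z1 where "z1 = Sup Sg"
  have z1S: "z1 \<in> Sg" unfolding z1_def by (rule closed_contains_Sup[OF neSg bSg cSg])
  have "z1 \<noteq> z2" using z1S z2S disj unfolding S0_def Sg_def by auto
  hence z12: "z1 < z2" using z1S unfolding Sg_def by auto
  have z2T: "z2 \<le> T'" using z2S unfolding S0_def by (auto simp: Z0_iff)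
  have free: "s \<notin> Z" if s: "z1 < s" "s < z2" for s
  proof
    assume "s \<in> Z"
    hence "s \<in> Z0 \<or> s \<in> Zg" unfolding Z_def by auto
    thus False
    proof
      assume "s \<in> Z0"
      hence "z2 \<le> s" unfolding z2_def using s z1S zz2 bS0 by (intro cInf_lower) (auto simp: S0_def Sg_def)
      thus False using s by simp
    next
      assume "s \<in> Zg"
      hence "s \<le> z1" unfolding z1_def using s z1S bSg by (intro cSup_upper) (auto simp: Sg_def)
      thus False using s by simp
    qed
  qed
  have "V z2 \<le> V z1" using gap(1)[OF z12 z2T free] z12 by auto
  moreover have "\<bar>V z2\<bar> \<le> s0" using z2S Z0b T'_le unfolding S0_def by (auto simp: Z0_iff)
  moreover have "\<bar>V z1 - Phi g\<bar> \<le> s1" using z1S Zgb T'_le unfolding Sg_def Zg_def by auto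
  ultimately show False using sep by (simp add: abs_le_iff)
qed

lemma s1_nonneg: "Zg \<noteq> {} \<Longrightarrow> 0 \<le> s1"
proof -
  assume "Zg \<noteq> {}"
  then obtain x where "x \<in> Zg" by auto
  hence "\<bar>V x - Phi g\<bar> \<le> s1" using Zgb T'_le unfolding Zg_def by auto
  thus ?thesis by (meson abs_ge_zero order_trans)
qed

lemma s0_nonneg: "Z0 \<noteq> {} \<Longrightarrow> 0 \<le> s0"
proof -
  assume "Z0 \<noteq> {}"
  then obtain x where "x \<in> Z0" by auto
  hence "\<bar>V x\<bar> \<le> s0" using Z0b T'_le by (auto simp: Z0_iff)
  thus ?thesis by (meson abs_ge_zero order_trans)
qed

lemma caseA:
  assumes fr: "\<forall>s. \<exists>z\<in>Zg. z \<le> s"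
  shows "\<exists>s. \<forall>t\<le>s. Phi (w t) \<le> Phi g + s1 + 2 * s1 / c"
proof -
  obtain zs where zs: "zs \<in> Zg" using fr by blast
  have s1: "0 \<le> s1" using s1_nonneg zs by auto
  have c2: "0 \<le> 2 * s1 / c" using s1 c_pos by simp
  have "Phi (w t) \<le> Phi g + s1 + 2 * s1 / c" if t: "t \<le> zs" for t
  proof -
    have tT: "t \<le> T'" using t zs unfolding Zg_def by auto
    obtain zl where zl: "zl \<in> Zg" "zl \<le> t" using fr by blast
    show ?thesis
    proof (cases "t \<in> Z")
      case True
      have "t \<notin> Z0" using label_mono[OF zl(1)] zl(2) by force
      hence "t \<in> Zg" using True unfolding Z_def by auto
      hence "Phi (w t) \<le> Phi g + s1" using Zgb T'_le unfolding Zg_def by auto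
      thus ?thesis using c2 by linarith
    next
      case False
      obtain z1 z2 where zz: "z1 \<in> Z" "z2 \<in> Z" "z1 < t" "t < z2" "z2 \<le> zs" and free: "\<forall>s. z1 < s \<and> s < z2 \<longrightarrow> s \<notin> Z"
        using bracket[OF tT False, of zl zs] zl zs t unfolding Z_def by blast
      have z1g: "z1 \<in> Zg"
      proof -
        obtain zl' where zl': "zl' \<in> Zg" "zl' \<le> z1" using fr by blast
        hence "z1 \<notin> Z0" using label_mono[OF zl'(1)] by force
        thus ?thesis using zz unfolding Z_def by auto
      qed
      have z2g: "z2 \<in> Zg"
      proof -
        have "z2 \<notin> Z0" using label_mono[OF z1g] zz by force
        thus ?thesis using zz unfolding Z_def by auto
      qed
      have z2T: "z2 \<le> T'" using Z_le zz by auto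
      have g1: "Phi (w t) \<le> Phi (w z1) + (V z1 - V t) / c" "V z2 \<le> V t"
        using gap[OF zz(3)[THEN less_trans, OF zz(4)] z2T] free zz by auto
      have b1: "\<bar>V z1 - Phi g\<bar> \<le> s1" "Phi (w z1) \<le> Phi g + s1" using z1g Zgb T'_le unfolding Zg_def by auto
      have b2: "\<bar>V z2 - Phi g\<bar> \<le> s1" using z2g Zgb T'_le unfolding Zg_def by auto
      have "V z1 - V t \<le> 2 * s1" using b1 b2 g1 by (simp add: abs_le_iff)
      hence "(V z1 - V t) / c \<le> 2 * s1 / c" using c_pos by (intro divide_right_mono) auto
      thus ?thesis using g1 b1 by linarith
    qed
  qed
  thus ?thesis by blast
qed

lemma caseB:
  assumes nfr: "\<exists>s. \<forall>z\<in>Zg. s < z"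
  shows "\<exists>s. \<forall>t\<le>s. \<exists>z1\<le>t. w z1 \<le> eta \<and> (\<forall>\<tau>. z1 \<le> \<tau> \<and> \<tau> \<le> t \<longrightarrow> -s0 - 2 * s0 / c \<le> Phi (w \<tau>))"
proof -
  obtain s where s: "\<forall>z\<in>Zg. s < z" using nfr by blast
  obtain zs where zs: "zs \<in> Z" "zs \<le> min s T'" using noZfree[of "min s T'"] by auto
  have zs0: "zs \<in> Z0" using zs s unfolding Z_def by force
  have s0: "0 \<le> s0" using s0_nonneg zs0 by auto
  have c2: "0 \<le> 2 * s0 / c" using s0 c_pos by simp
  have "\<exists>z1\<le>t. w z1 \<le> eta \<and> (\<forall>\<tau>. z1 \<le> \<tau> \<and> \<tau> \<le> t \<longrightarrow> -s0 - 2 * s0 / c \<le> Phi (w \<tau>))" if t: "t \<le> zs" for t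
  proof -
    have tT: "t \<le> T'" using t zs by simp
    show ?thesis
    proof (cases "t \<in> Z")
      case True
      hence "t \<in> Z0" using s t zs unfolding Z_def by force
      hence "w t \<le> eta" "-s0 \<le> Phi (w t)" using Z0b T'_le by (auto simp: Z0_iff)
      thus ?thesis using c2 by (intro exI[of _ t]) auto
    next
      case False
      obtain zl where zl: "zl \<in> Z" "zl \<le> t" using noZfree[OF tT] by auto
      obtain z1 z2 where zz: "z1 \<in> Z" "z2 \<in> Z" "z1 < t" "t < z2" "z2 \<le> zs" and free: "\<forall>s. z1 < s \<and> s < z2 \<longrightarrow> s \<notin> Z"
        using bracket[OF tT False zl zs(1)] t by blast
      have z10: "z1 \<in> Z0" using zz s t zs unfolding Z_def by force
      have z20: "z2 \<in> Z0" using zz s t zs unfolding Z_def by force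
      have z2T: "z2 \<le> T'" using Z_le zz by auto
      have b1: "\<bar>V z1\<bar> \<le> s0" "-s0 \<le> Phi (w z1)" "w z1 \<le> eta" using z10 Z0b T'_le by (auto simp: Z0_iff)
      have b2: "\<bar>V z2\<bar> \<le> s0" using z20 Z0b T'_le by (auto simp: Z0_iff)
      have "-s0 - 2 * s0 / c \<le> Phi (w \<tau>)" if tau: "z1 \<le> \<tau>" "\<tau> \<le> t" for \<tau>
      proof -
        have tz2: "\<tau> \<le> z2" using tau zz by simp
        have g1: "Phi (w z1) - (V z1 - V \<tau>) / c \<le> Phi (w \<tau>)" "V z2 \<le> V \<tau>"
          using gap[OF zz(3)[THEN less_trans, OF zz(4)] z2T _ tau(1) tz2] free by auto
        have "V z1 - V \<tau> \<le> 2 * s0" using b1 b2 g1 by (simp add: abs_le_iff)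
        hence "(V z1 - V \<tau>) / c \<le> 2 * s0 / c" using c_pos by (intro divide_right_mono) auto
        thus ?thesis using g1 b1 by linarith
      qed
      thus ?thesis using b1 zz by (intro exI[of _ z1]) auto
    qed
  qed
  thus ?thesis by blast
qed

end



context osc begin

lemma w_isCont: "t \<le> T \<Longrightarrow> isCont w t" using dw DERIV_isCont by blast

lemma conv_r:
  assumes fr: "\<forall>s. \<exists>t\<le>s. b < w t" and b: "0 < b" "b \<le> g" and r: "0 < r0" "r0 \<le> g/2"
  shows "\<exists>s. \<forall>t\<le>s. \<bar>w t - g\<bar> < r0"
proof -
  define Dl where "Dl = min (Phi (g - r0)) (Phi (g + r0)) - Phi g"
  have Dl: "Dl > 0" unfolding Dl_def using Phi_strict_left[of "g - r0"] Phi_strict_right[of "g + r0"] r g_pos by auto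
  have near: "\<bar>x - g\<bar> < r0" if x: "0 < x" "Phi x < Phi g + Dl" for x
  proof (rule ccontr)
    assume "\<not> \<bar>x - g\<bar> < r0"
    hence "x \<le> g - r0 \<or> g + r0 \<le> x" by auto
    hence "min (Phi (g - r0)) (Phi (g + r0)) \<le> Phi x"
    proof
      assume "x \<le> g - r0" thus ?thesis using Phi_nonincr[of x "g - r0"] x r by auto
    next
      assume "g + r0 \<le> x" thus ?thesis using Phi_nondecr[of "g + r0" x] r g_pos by auto
    qed
    thus False using x unfolding Dl_def by simp
  qed
  define Pb where "Pb = - Phi b"
  have Pb: "Pb > 0" unfolding Pb_def using Phi_neg[OF b] by simp
  have Pg: "- Phi g > 0" using Phi_neg[OF g_pos] by simp
  define tau where "tau = min (min (- Phi g) Pb) Dl / (2 + 4 / c)"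
  have cc: "2 + 4 / c > 0" using c_pos by (simp add: add_pos_pos)
  have tau: "tau > 0" unfolding tau_def using Pb Pg Dl cc by simp
  have tau_le: "tau * (2 + 4 / c) \<le> - Phi g" "tau * (2 + 4 / c) \<le> Pb" "tau * (2 + 4 / c) \<le> Dl"
    unfolding tau_def using cc by auto
  obtain eta1 where eta1: "eta1 > 0" "\<And>x. \<bar>x - g\<bar> \<le> eta1 \<Longrightarrow> \<bar>Phi x - Phi g\<bar> \<le> tau / 3 \<and> \<bar>phi x\<bar> \<le> 1"
    using near_g[of "tau / 3"] tau by auto
  define C0 where "C0 = 1 + (Ap + k0) * (1 + del)"
  have C0: "C0 > 0" unfolding C0_def using Ap_pos k0_pos del_pos by (simp add: add_pos_nonneg)
  define m where "m = min (min (min 1 r0) (min b (g/4))) (min eta1 (min (tau / (3 * (1 + del))) (tau / (2 * C0))))"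
  have m_pos: "m > 0" unfolding m_def using r b g_pos eta1 tau del_pos C0 by simp
  have m_le: "m \<le> 1" "m \<le> r0" "m \<le> b" "m \<le> g / 4" "m \<le> eta1" "m \<le> tau / (3 * (1 + del))" "m \<le> tau / (2 * C0)"
    unfolding m_def by (meson min.cobounded1 min.cobounded2 order_trans)+
  define eta where "eta = m / 2"
  have eta_pos: "eta > 0" unfolding eta_def using m_pos by simp
  have eta_le: "eta < 1" "eta < r0" "eta < b" "eta < g / 4" "eta \<le> eta1" "eta < tau / (3 * (1 + del))" "eta < tau / (2 * C0)"
    using m_pos m_le unfolding eta_def by linarith+
  define s0 where "s0 = C0 * eta"
  define s1 where "s1 = tau / 3 + eta^2 / 2 + del * eta"
  have s0_lt: "s0 < tau / 2"
  proof -
    have "C0 * eta < C0 * (tau / (2 * C0))" using eta_le(7) C0 by (intro mult_strict_left_mono) auto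
    thus ?thesis using C0 unfolding s0_def by simp
  qed
  have s1_lt: "s1 < 2 * tau / 3"
  proof -
    have "eta^2 \<le> eta" using eta_pos eta_le(1) by (simp add: power2_eq_square mult_le_cancel_right1)
    hence "eta^2 / 2 + del * eta \<le> eta * (1 + del)" using eta_pos by (simp add: algebra_simps)
    also have "\<dots> < tau / (3 * (1 + del)) * (1 + del)" using eta_le(6) del_pos by (intro mult_strict_right_mono) auto
    also have "\<dots> = tau / 3" using del_pos by (simp add: field_simps)
    finally show ?thesis unfolding s1_def by simp
  qed
  define rho where "rho = min (eta^2) ((mm eta)^2)"
  have rho: "rho > 0" unfolding rho_def using eta_pos mm_pos[of eta] eta_le by simp
  have lim0: "((\<lambda>t. K1 * (e t)^2) \<longlongrightarrow> 0) at_bot" using tendsto_mult[OF tendsto_const tendsto_power[OF elim, of 2], of K1] by simp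
  have cr: "c / 2 * rho > 0" using c_pos rho by simp
  have "eventually (\<lambda>t. K1 * (e t)^2 < c / 2 * rho) at_bot"
    by (rule order_tendstoD(2)[OF lim0 cr])
  then obtain N where N: "\<And>t. t \<le> N \<Longrightarrow> K1 * (e t)^2 < c / 2 * rho" by (auto simp: eventually_at_bot_linorder)
  define T' where "T' = min N T"
  interpret Z: osc2 a k0 p g Ap M B T w v v2 e eta rho T' s0 s1
  proof unfold_locales
    show "0 < eta" by (rule eta_pos)
    show "2 * eta < g" using eta_le g_pos by simp
    show "T' \<le> T" unfolding T'_def by simp
    show "0 < rho" by (rule rho)
    show "K1 * (e t)^2 \<le> c / 2 * rho" if "t \<le> T'" for t using N[of t] that unfolding T'_def by simp
    show "rho \<le> D t" if t: "t \<le> T'" "\<not> (\<bar>v t\<bar> \<le> eta \<and> w t \<le> eta)" "\<not> (\<bar>v t\<bar> \<le> eta \<and> \<bar>w t - g\<bar> \<le> eta)" for t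
    proof (cases "\<bar>v t\<bar> \<le> eta")
      case False
      hence "eta^2 \<le> \<bar>v t\<bar>^2" using eta_pos power_mono[of eta "\<bar>v t\<bar>" 2] by simp
      hence "eta^2 \<le> (v t)^2" by simp
      moreover have "0 \<le> (phi (w t))^2" by simp
      ultimately have "eta^2 \<le> D t" unfolding D_def by linarith
      thus ?thesis unfolding rho_def by (simp add: min_le_iff_disj)
    next
      case True
      hence "eta \<le> w t" "eta \<le> \<bar>w t - g\<bar>" using t by auto
      hence "mm eta \<le> \<bar>phi (w t)\<bar>" using phi_lower[of eta "w t"] eta_pos eta_le g_pos by simp
      hence "(mm eta)^2 \<le> \<bar>phi (w t)\<bar>^2" using mm_pos[of eta] eta_pos eta_le power_mono[of "mm eta" "\<bar>phi (w t)\<bar>" 2] by simp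
      hence "(mm eta)^2 \<le> (phi (w t))^2" by simp
      moreover have "0 \<le> (v t)^2" by simp
      ultimately have "(mm eta)^2 \<le> D t" unfolding D_def by linarith
      thus ?thesis unfolding rho_def by (simp add: min_le_iff_disj)
    qed
    show "\<bar>V t\<bar> \<le> s0 \<and> - s0 \<le> Phi (w t)" if t: "t \<le> T" "\<bar>v t\<bar> \<le> eta" "w t \<le> eta" for t
    proof -
      have sb: "\<bar>Phi (w t)\<bar> \<le> (Ap + k0) * eta" "\<bar>phi (w t)\<bar> \<le> (Ap + k0) * eta"
        using small_bounds[of "w t" eta] wpos[OF t(1)] t eta_le by auto
      have v2: "(v t)^2 \<le> eta^2" using t(2) by (metis abs_ge_zero power2_abs power_mono)
      have e2: "eta^2 \<le> eta" using eta_pos eta_le(1) by (simp add: power2_eq_square mult_le_cancel_right1)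
      have "\<bar>del * v t * phi (w t)\<bar> \<le> del * eta * ((Ap + k0) * eta)"
        using t(2) sb(2) del_pos by (simp add: abs_mult mult_mono mult_left_mono mult.assoc)
      also have "\<dots> = (del * (Ap + k0)) * (eta * eta)" by (simp add: algebra_simps)
      also have "\<dots> \<le> (del * (Ap + k0)) * eta"
        using e2 del_pos Ap_pos k0_pos by (intro mult_left_mono) (auto simp: power2_eq_square)
      finally have m: "\<bar>del * v t * phi (w t)\<bar> \<le> del * (Ap + k0) * eta" .
      have "\<bar>V t\<bar> \<le> (v t)^2/2 + \<bar>Phi (w t)\<bar> + \<bar>del * v t * phi (w t)\<bar>"
      proof -
        have "\<bar>(v t)^2/2\<bar> = (v t)^2/2" by simp
        thus ?thesis unfolding V_def
          using abs_triangle_ineq[of "(v t)^2/2 + Phi (w t)" "del * v t * phi (w t)"]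
            abs_triangle_ineq[of "(v t)^2/2" "Phi (w t)"] by linarith
      qed
      also have "\<dots> \<le> eta + (Ap + k0) * eta + del * (Ap + k0) * eta" using v2 e2 sb m zero_le_power2[of "v t"] by linarith
      also have "\<dots> \<le> s0" unfolding s0_def C0_def by (simp add: algebra_simps)
      finally have "\<bar>V t\<bar> \<le> s0" .
      moreover have "(Ap + k0) * eta \<le> s0" unfolding s0_def C0_def using eta_pos del_pos Ap_pos k0_pos
      proof (intro mult_right_mono)
        have "(Ap + k0) * 1 \<le> (Ap + k0) * (1 + del)" using Ap_pos k0_pos del_pos by (intro mult_left_mono) auto
        thus "Ap + k0 \<le> 1 + (Ap + k0) * (1 + del)" by simp
      qed (use eta_pos in auto)
      ultimately show ?thesis using sb by (simp add: abs_le_iff)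
    qed
    show "\<bar>V t - Phi g\<bar> \<le> s1 \<and> Phi (w t) \<le> Phi g + s1" if t: "t \<le> T" "\<bar>v t\<bar> \<le> eta" "\<bar>w t - g\<bar> \<le> eta" for t
    proof -
      have nb: "\<bar>Phi (w t) - Phi g\<bar> \<le> tau / 3" "\<bar>phi (w t)\<bar> \<le> 1" using eta1(2)[of "w t"] t eta_le by auto
      have v2: "(v t)^2 \<le> eta^2" using t(2) by (metis abs_ge_zero power2_abs power_mono)
      have m: "\<bar>del * v t * phi (w t)\<bar> \<le> del * eta"
      proof -
        have "\<bar>v t\<bar> * \<bar>phi (w t)\<bar> \<le> eta * 1" by (rule mult_mono) (use t(2) nb(2) eta_pos in auto)
        hence "\<bar>v t * phi (w t)\<bar> \<le> eta * 1" by (simp add: abs_mult)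
        thus ?thesis using del_pos by (simp add: abs_mult mult.assoc mult_left_mono)
      qed
      have "\<bar>V t - Phi g\<bar> \<le> (v t)^2/2 + \<bar>Phi (w t) - Phi g\<bar> + \<bar>del * v t * phi (w t)\<bar>"
      proof -
        have "\<bar>(v t)^2/2\<bar> = (v t)^2/2" by simp
        moreover have "V t - Phi g = (v t)^2/2 + (Phi (w t) - Phi g) + del * v t * phi (w t)" unfolding V_def by simp
        ultimately show ?thesis
          using abs_triangle_ineq[of "(v t)^2/2 + (Phi (w t) - Phi g)" "del * v t * phi (w t)"]
            abs_triangle_ineq[of "(v t)^2/2" "Phi (w t) - Phi g"] by linarith
      qed
      also have "\<dots> \<le> s1" unfolding s1_def using v2 nb m by linarith
      finally have A1: "\<bar>V t - Phi g\<bar> \<le> s1" .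
      have "0 \<le> eta^2 / 2 + del * eta" using eta_pos del_pos by simp
      moreover have "Phi (w t) - Phi g \<le> tau / 3" using nb(1) abs_ge_self[of "Phi (w t) - Phi g"] by linarith
      ultimately have "Phi (w t) \<le> Phi g + s1" unfolding s1_def by linarith
      with A1 show ?thesis by simp
    qed
    show "s0 + s1 < - Phi g" using s0_lt s1_lt tau_le(1) tau c_pos
    proof -
      have "tau * 2 \<le> tau * (2 + 4 / c)" using tau c_pos by (intro mult_left_mono) auto
      thus ?thesis using s0_lt s1_lt tau_le(1) tau by linarith
    qed
  qed
  have cfac: "1 + 2 / c > 0" using c_pos by (simp add: add_pos_nonneg)
  have half: "tau * (1 + 2 / c) = tau * (2 + 4 / c) / 2" by (simp add: field_simps)
  show ?thesis
  proof (cases "\<forall>s. \<exists>z\<in>Z.Zg. z \<le> s")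
    case True
    obtain s where s: "\<And>t. t \<le> s \<Longrightarrow> Phi (w t) \<le> Phi g + s1 + 2 * s1 / c" using Z.caseA[OF True] by blast
    have "s1 + 2 * s1 / c < Dl"
    proof -
      have "s1 + 2 * s1 / c = s1 * (1 + 2 / c)" by (simp add: field_simps)
      also have "\<dots> \<le> (2 * tau / 3) * (1 + 2 / c)" using s1_lt cfac by (intro mult_right_mono) auto
      also have "\<dots> < tau * (1 + 2 / c)" using tau cfac by (intro mult_strict_right_mono) auto
      also have "\<dots> \<le> Dl / 2" unfolding half by (rule divide_right_mono[OF tau_le(3)]) simp
      also have "\<dots> \<le> Dl" using Dl by simp
      finally show ?thesis .
    qed
    hence "\<bar>w t - g\<bar> < r0" if "t \<le> min s T" for t using near[of "w t"] s[of t] wpos[of t] that by force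
    thus ?thesis by blast
  next
    case False
    hence "\<exists>s. \<forall>z\<in>Z.Zg. s < z" by (auto simp: not_le)
    then obtain s where s: "\<And>t. t \<le> s \<Longrightarrow> \<exists>z1\<le>t. w z1 \<le> eta \<and> (\<forall>\<tau>. z1 \<le> \<tau> \<and> \<tau> \<le> t \<longrightarrow> -s0 - 2 * s0 / c \<le> Phi (w \<tau>))"
      using Z.caseB by blast
    obtain t where t: "t \<le> min s T" "b < w t" using fr by blast
    obtain z1 where z1: "z1 \<le> t" "w z1 \<le> eta" "\<And>\<tau>. z1 \<le> \<tau> \<Longrightarrow> \<tau> \<le> t \<Longrightarrow> -s0 - 2 * s0 / c \<le> Phi (w \<tau>)"
      using s[of t] t by auto
    have "\<exists>x. z1 \<le> x \<and> x \<le> t \<and> w x = b"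
      by (rule IVT) (use z1 t eta_le w_isCont in auto)
    then obtain x where x: "z1 \<le> x" "x \<le> t" "w x = b" by blast
    have "-s0 - 2 * s0 / c \<le> Phi b" using z1(3)[OF x(1,2)] x(3) by simp
    moreover have "s0 + 2 * s0 / c < Pb"
    proof -
      have "s0 + 2 * s0 / c = s0 * (1 + 2 / c)" by (simp add: field_simps)
      also have "\<dots> < (tau / 2) * (1 + 2 / c)" using s0_lt cfac by (intro mult_strict_right_mono) auto
      also have "\<dots> \<le> tau * (1 + 2 / c)" using tau cfac by (intro mult_right_mono) auto
      also have "\<dots> \<le> Pb / 2" unfolding half by (rule divide_right_mono[OF tau_le(2)]) simp
      also have "\<dots> \<le> Pb" using Pb by simp
      finally show ?thesis .
    qed
    ultimately show ?thesis unfolding Pb_def by simp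
  qed
qed

lemma conv:
  assumes fr: "\<forall>s. \<exists>t\<le>s. b < w t" and b: "0 < b" "b \<le> g"
  shows "(w \<longlongrightarrow> g) at_bot"
proof (rule tendstoI)
  fix r :: real assume r: "r > 0"
  have rr: "0 < min r (g/2)" "min r (g/2) \<le> g/2" using r g_pos by auto
  obtain s where s: "\<And>t. t \<le> s \<Longrightarrow> \<bar>w t - g\<bar> < min r (g/2)"
    using conv_r[OF fr b rr] by blast
  show "eventually (\<lambda>t. dist (w t) g < r) at_bot"
    unfolding eventually_at_bot_linorder using s by (intro exI[of _ s]) (auto simp: dist_real_def)
qed

end



lemma exp_at_right0: "filterlim exp (at_right (0::real)) at_bot"
  unfolding filterlim_at using exp_at_bot by auto

lemma exp_lin_to0: "k > 0 \<Longrightarrow> ((\<lambda>t::real. exp (k * t)) \<longlongrightarrow> 0) at_bot"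
  by (rule filterlim_compose[OF exp_at_bot], rule filterlim_tendsto_pos_mult_at_bot[OF tendsto_const _ filterlim_ident])

theorem lemma2p2:
  fixes N :: nat and \<mu> \<alpha> k0 \<nu> p t1 :: real
    and K f w w' w'' :: "real \<Rightarrow> real"
  assumes N: "N \<ge> 3" and mu: "\<mu> \<ge> 0"
    and K_cont: "continuous_on {0<..} K" and K_pos: "\<And>r. r > 0 \<Longrightarrow> K r > 0"
    and alpha: "\<alpha> > -2" and k0: "k0 > 0"
    and K_asym: "((\<lambda>r. K r / r powr \<alpha>) \<longlongrightarrow> k0) (at_right 0)"
    and f_cont: "continuous_on {0<..} f" and f_nonneg: "\<And>r. r > 0 \<Longrightarrow> f r \<ge> 0"
    and f_nonzero: "\<exists>r>0. f r \<noteq> 0"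
    and nu: "\<nu> > -2" and f_asym: "f \<in> O[at_right 0](\<lambda>r. r powr \<nu>)"
    and p: "p > pS (real N) \<alpha>"
    and w1: "\<And>t. t < t1 \<Longrightarrow> (w has_real_derivative w' t) (at t)"
    and w2: "\<And>t. t < t1 \<Longrightarrow> (w' has_real_derivative w'' t) (at t)"
    and w2_cont: "continuous_on {..<t1} w''"
    and w_pos: "\<And>t. t < t1 \<Longrightarrow> w t > 0"
    and eq: "\<And>t. t < t1 \<Longrightarrow>
       w'' t + acoef (real N) \<alpha> p * w' t - Acoef (real N) \<alpha> p powr (p - 1) * w t
       + Lfun K \<alpha> t * w t powr p + \<mu> * gfun f \<alpha> p t = 0"
    and ls_pos: "0 < Limsup at_bot (\<lambda>t. ereal (w t))"
    and ls_fin: "Limsup at_bot (\<lambda>t. ereal (w t)) < \<infinity>"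
  shows "(w \<longlongrightarrow> gammacoef k0 (real N) \<alpha> p) at_bot"
proof -
  define th where "th = theta \<alpha> p"
  define a where "a = acoef (real N) \<alpha> p"
  define cc where "cc = ccoef (real N) \<alpha> p"
  define Ap where "Ap = Acoef (real N) \<alpha> p powr (p - 1)"
  define g where "g = gammacoef k0 (real N) \<alpha> p"
  have N2: "real N - 2 > 0" using N by simp
  have pS: "p > (real N + 2 + 2 * \<alpha>) / (real N - 2)" using p by (simp add: pS_def)
  hence pS2: "p * (real N - 2) > real N + 2 + 2 * \<alpha>" using N2 by (simp add: divide_less_eq)
  have p1: "p > 1"
  proof -
    have "(real N + 2 + 2 * \<alpha>) / (real N - 2) > 1" using N2 alpha by (simp add: less_divide_eq)
    thus ?thesis using pS by simp
  qed
  have th_pos: "th > 0" unfolding th_def theta_def using p1 alpha by simp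
  have th_lt: "2 * th < real N - 2"
  proof -
    have "2 * (2 + \<alpha>) < (p - 1) * (real N - 2)" using pS2 by (simp add: algebra_simps)
    hence "2 * (2 + \<alpha>) / (p - 1) < real N - 2" using p1 by (simp add: divide_less_eq mult.commute)
    thus ?thesis unfolding th_def theta_def by simp
  qed
  have a_pos: "a > 0" unfolding a_def acoef_def using th_lt by (simp add: th_def)
  have cc_pos: "cc > 0" unfolding cc_def ccoef_def using th_lt th_pos by (simp add: th_def)
  have thc: "th * cc > 0" using th_pos cc_pos by simp
  have Ap_eq: "Ap = th * cc"
  proof -
    have "Ap = ((th * cc) powr (1 / (p - 1))) powr (p - 1)"
      unfolding Ap_def Acoef_def th_def cc_def by simp
    also have "\<dots> = (th * cc) powr (1 / (p - 1) * (p - 1))" by (simp add: powr_powr)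
    also have "\<dots> = th * cc" using p1 thc by simp
    finally show ?thesis .
  qed
  have g_pos: "g > 0" unfolding g_def gammacoef_def Acoef_def using k0 thc by (auto intro!: mult_pos_pos simp: th_def cc_def)
  have Ap_g: "Ap = k0 * g powr (p - 1)"
  proof -
    have "g powr (p - 1) = (k0 powr (- 1 / (p - 1))) powr (p - 1) * (Acoef (real N) \<alpha> p) powr (p - 1)"
      unfolding g_def gammacoef_def using k0 by (simp add: powr_mult)
    also have "(k0 powr (- 1 / (p - 1))) powr (p - 1) = k0 powr (-1)" using p1 by (simp add: powr_powr)
    finally have "g powr (p - 1) = k0 powr (-1) * Ap" by (simp add: Ap_def)
    thus ?thesis using k0 by (simp add: powr_minus)
  qed
  define L where "L = Lfun K \<alpha>"
  define G where "G = gfun f \<alpha> p"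
  have L_lim: "(L \<longlongrightarrow> k0) at_bot"
  proof -
    have "((\<lambda>t. K (exp t) / exp t powr \<alpha>) \<longlongrightarrow> k0) at_bot"
      using filterlim_compose[OF K_asym exp_at_right0] by simp
    moreover have "K (exp t) / exp t powr \<alpha> = L t" for t
      unfolding L_def Lfun_def by (simp add: powr_def exp_minus field_simps)
    ultimately show ?thesis by simp
  qed
  have G_lim: "(G \<longlongrightarrow> 0) at_bot"
  proof -
    obtain C where C: "C > 0" "eventually (\<lambda>r. norm (f r) \<le> C * norm (r powr \<nu>)) (at_right 0)"
      using f_asym by (elim landau_o.bigE)
    have ev: "eventually (\<lambda>t. norm (f (exp t)) \<le> C * norm (exp t powr \<nu>)) at_bot"
      using filterlim_iff[THEN iffD1, OF exp_at_right0, rule_format, OF C(2)] .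
    have "eventually (\<lambda>t. norm (G t) \<le> C * exp ((2 + th + \<nu>) * t)) at_bot"
      using ev
    proof eventually_elim
      case (elim t)
      have "norm (G t) = exp ((2 + th) * t) * norm (f (exp t))"
        unfolding G_def gfun_def by (simp add: abs_mult th_def)
      also have "\<dots> \<le> exp ((2 + th) * t) * (C * norm (exp t powr \<nu>))"
        using elim by (intro mult_left_mono) auto
      also have "\<dots> = C * exp ((2 + th + \<nu>) * t)"
        by (simp add: powr_def algebra_simps exp_add[symmetric])
      finally show ?case .
    qed
    moreover have "((\<lambda>t. C * exp ((2 + th + \<nu>) * t)) \<longlongrightarrow> 0) at_bot"
      using tendsto_mult[OF tendsto_const exp_lin_to0[of "2 + th + \<nu>"], of C] th_pos nu by simp
    ultimately show ?thesis by (rule Lim_null_comparison)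
  qed
  obtain n :: nat where n: "Limsup at_bot (\<lambda>t. ereal (w t)) < ereal (real n)"
    using ls_fin less_PInf_Ex_of_nat by auto
  define M where "M = real n"
  have evM: "eventually (\<lambda>t. w t < M) at_bot"
    using Limsup_lessD[OF n] unfolding M_def by simp
  obtain b0 where b0: "0 < ereal b0" "ereal b0 < Limsup at_bot (\<lambda>t. ereal (w t))"
    using ereal_dense2[OF ls_pos] by auto
  have fr0: "\<not> eventually (\<lambda>t. ereal (w t) \<le> ereal b0) at_bot"
    using Limsup_bounded[of "\<lambda>t. ereal (w t)" "ereal b0" at_bot] b0(2) by auto
  have fr: "\<forall>s. \<exists>t\<le>s. min b0 g < w t"
  proof
    fix s
    from fr0 have "\<not> eventually (\<lambda>t. \<not> b0 < w t) at_bot" by (simp add: not_less)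
    hence "\<not> (\<forall>t\<le>s. \<not> b0 < w t)" unfolding eventually_at_bot_linorder by blast
    thus "\<exists>t\<le>s. min b0 g < w t" by (auto simp: min_less_iff_disj)
  qed
  have b0pos: "0 < min b0 g" using b0(1) g_pos by simp
  define e where "e = (\<lambda>t. (L t - k0) * w t powr p + \<mu> * G t)"
  have e_lim: "(e \<longlongrightarrow> 0) at_bot"
  proof -
    have "eventually (\<lambda>t. norm (e t) \<le> \<bar>L t - k0\<bar> * M powr p + \<mu> * \<bar>G t\<bar>) at_bot"
      using evM eventually_at_bot_linorder[of "\<lambda>t. t < t1"]
    proof -
      have ev1: "eventually (\<lambda>t. t < t1) at_bot" unfolding eventually_at_bot_linorder
        by (intro exI[of _ "t1 - 1"]) auto
      show ?thesis using evM ev1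
      proof eventually_elim
        case (elim t)
        have wp: "w t powr p \<le> M powr p" using elim w_pos[of t] p1 by (intro powr_mono2) auto
        have "norm (e t) \<le> \<bar>(L t - k0) * w t powr p\<bar> + \<bar>\<mu> * G t\<bar>"
          unfolding e_def using abs_triangle_ineq by simp
        also have "\<dots> = \<bar>L t - k0\<bar> * \<bar>w t powr p\<bar> + \<bar>\<mu> * G t\<bar>" by (simp add: abs_mult)
        also have "\<dots> \<le> \<bar>L t - k0\<bar> * M powr p + \<mu> * \<bar>G t\<bar>"
          using wp mu by (intro add_mono mult_left_mono) (auto simp: abs_mult)
        finally show ?case .
      qed
    qed
    moreover have "((\<lambda>t. \<bar>L t - k0\<bar> * M powr p + \<mu> * \<bar>G t\<bar>) \<longlongrightarrow> 0) at_bot"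
    proof -
      have "((\<lambda>t. L t - k0) \<longlongrightarrow> 0) at_bot" using L_lim by (simp add: tendsto_diff[OF L_lim tendsto_const, of k0, simplified])
      hence "((\<lambda>t. \<bar>L t - k0\<bar> * M powr p + \<mu> * \<bar>G t\<bar>) \<longlongrightarrow> \<bar>0\<bar> * M powr p + \<mu> * \<bar>0\<bar>) at_bot"
        by (intro tendsto_intros G_lim)
      thus ?thesis by simp
    qed
    ultimately show ?thesis by (rule Lim_null_comparison)
  qed
  have eve: "eventually (\<lambda>t. \<bar>e t\<bar> < 1) at_bot"
    using order_tendstoD(2)[OF tendsto_rabs[OF e_lim]] by simp
  obtain N1 where N1: "\<And>t. t \<le> N1 \<Longrightarrow> w t < M \<and> \<bar>e t\<bar> < 1"
    using eventually_conj[OF evM eve] unfolding eventually_at_bot_linorder by blast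
  define T where "T = min N1 (t1 - 1)"
  have Tt: "t \<le> T \<Longrightarrow> t < t1" for t unfolding T_def by simp
  have eqn: "w'' t = -a * w' t + Ap * w t - k0 * w t powr p - e t" if "t \<le> T" for t
    using eq[OF Tt[OF that]] unfolding e_def a_def Ap_def L_def G_def by (simp add: algebra_simps)
  define H where "H = Ap * M + k0 * M powr p + 1"
  have Hb: "\<bar>w'' t + a * w' t\<bar> \<le> H" if t: "t \<le> T" for t
  proof -
    have wt: "0 < w t" "w t \<le> M" using w_pos[OF Tt[OF t]] N1[of t] t unfolding T_def by auto
    have wp: "w t powr p \<le> M powr p" using wt p1 by (intro powr_mono2) auto
    have "w'' t + a * w' t = Ap * w t - k0 * w t powr p - e t" using eqn[OF t] by simp
    moreover have "\<bar>e t\<bar> \<le> 1" using N1[of t] t unfolding T_def by auto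
    moreover have "Ap * w t \<le> Ap * M" using wt Ap_eq thc by (intro mult_left_mono) auto
    moreover have "k0 * w t powr p \<le> k0 * M powr p" using wp k0 by (intro mult_left_mono) auto
    moreover have "0 \<le> Ap * w t" "0 \<le> k0 * w t powr p" using wt Ap_eq thc k0 by auto
    ultimately show ?thesis unfolding H_def by (simp add: abs_le_iff)
  qed
  have vd1: "(w has_real_derivative w' s) (at s)" if "s \<le> T" for s using w1 Tt that by blast
  have vd2: "(w' has_real_derivative w'' s) (at s)" if "s \<le> T" for s using w2 Tt that by blast
  have vwp: "0 < w s" if "s \<le> T" for s using w_pos Tt that by blast
  have vwM: "w s \<le> M" if "s \<le> T" for s using N1[of s] that unfolding T_def by auto
  have vb: "\<bar>w' t\<bar> \<le> H / a + 1" if "t \<le> T" for t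
    using v_bound[OF a_pos vd1 vd2 Hb vwp vwM that] .
  define B where "B = H / a + 1"
  interpret OS: osc a k0 p g Ap M B T w w' w'' e
  proof unfold_locales
    show "0 < a" by (rule a_pos)
    show "0 < k0" by (rule k0)
    show "1 < p" by (rule p1)
    show "0 < g" by (rule g_pos)
    show "Ap = k0 * g powr (p - 1)" by (rule Ap_g)
    show "(w has_real_derivative w' t) (at t)" if "t \<le> T" for t using w1 Tt that by blast
    show "(w' has_real_derivative w'' t) (at t)" if "t \<le> T" for t using w2 Tt that by blast
    show "w'' t = - a * w' t + Ap * w t - k0 * w t powr p - e t" if "t \<le> T" for t using eqn that by simp
    show "0 < w t" if "t \<le> T" for t using w_pos Tt that by blast
    show "w t \<le> M" if "t \<le> T" for t using N1[of t] that unfolding T_def by auto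
    show "\<bar>w' t\<bar> \<le> B" if "t \<le> T" for t unfolding B_def using vb that by blast
    show "(e \<longlongrightarrow> 0) at_bot" by (rule e_lim)
  qed
  show ?thesis using OS.conv[OF fr b0pos] unfolding g_def by simp
qed


end
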